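(* Let $C<\infty$, let $(z_i)$ be a bimonotone basis of a Banach space, and let $(w_i)$ be a block basis of $(z_i)$ with $1\le\|w_i\|\le C$ for all $i$. Let $\mathcal{A}$ be the family of finite sets $F\subseteq\mathbb{N}$ such that $\|\sum_{i\in F}\pm w_i\|\le C$ for all choices of signs. Then there is a norm $|\cdot|$ on $[(w_i)]$ equivalent to the original norm such that $(w_i)$ is a normalized bimonotone basis for $|\cdot|$ and $|\sum_{i\in F}\pm w_i|=1$ for every $F\in\mathcal{A}$ and every choice of signs.
   Context: A basis is bimonotone if all its basis projections $P_{[m,n]}$ onto intervals of coordinates have norm at most $1$. $[(w_i)]$ denotes the closed linear span. *)

theory Defs
  imports "HOL-Analysis.Analysis"
begin

definition is_norm_on :: "'a::real_vector set \<Rightarrow> ('a \<Rightarrow> real) \<Rightarrow> bool" where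
  "is_norm_on Y N \<longleftrightarrow> subspace Y \<and>
     (\<forall>x\<in>Y. N x \<ge> 0 \<and> (N x = 0 \<longleftrightarrow> x = 0)) \<and>
     (\<forall>x\<in>Y. \<forall>y\<in>Y. N (x + y) \<le> N x + N y) \<and>
     (\<forall>x\<in>Y. \<forall>c. N (c *\<^sub>R x) = \<bar>c\<bar> * N x)"

definition equiv_norm_on :: "'a::real_normed_vector set \<Rightarrow> ('a \<Rightarrow> real) \<Rightarrow> bool" where
  "equiv_norm_on Y N \<longleftrightarrow> (\<exists>a b. a > 0 \<and> b > 0 \<and>
     (\<forall>y\<in>Y. a * norm y \<le> N y \<and> N y \<le> b * norm y))"

definition schauder_basis_wrt :: "('a::real_vector \<Rightarrow> real) \<Rightarrow> 'a set \<Rightarrow> (nat \<Rightarrow> 'a) \<Rightarrow> bool" where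
  "schauder_basis_wrt N Y w \<longleftrightarrow> (\<forall>i. w i \<in> Y) \<and>
     (\<forall>x\<in>Y. \<exists>!a::nat \<Rightarrow> real. (\<lambda>n. N ((\<Sum>i<n. a i *\<^sub>R w i) - x)) \<longlonglongrightarrow> 0)"

definition basis_coeff :: "('a::real_vector \<Rightarrow> real) \<Rightarrow> (nat \<Rightarrow> 'a) \<Rightarrow> 'a \<Rightarrow> nat \<Rightarrow> real" where
  "basis_coeff N w x = (THE a. (\<lambda>n. N ((\<Sum>i<n. a i *\<^sub>R w i) - x)) \<longlonglongrightarrow> 0)"

definition bimonotone_wrt :: "('a::real_vector \<Rightarrow> real) \<Rightarrow> 'a set \<Rightarrow> (nat \<Rightarrow> 'a) \<Rightarrow> bool" where
  "bimonotone_wrt N Y w \<longleftrightarrow> schauder_basis_wrt N Y w \<and>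
     (\<forall>x\<in>Y. \<forall>m n. N (\<Sum>i\<in>{m..n}. basis_coeff N w x i *\<^sub>R w i) \<le> N x)"

definition block_basis_of :: "(nat \<Rightarrow> 'a::real_vector) \<Rightarrow> (nat \<Rightarrow> 'a) \<Rightarrow> bool" where
  "block_basis_of w z \<longleftrightarrow> (\<exists>p::nat \<Rightarrow> nat. strict_mono p \<and>
     (\<forall>i. w i \<noteq> 0 \<and> (\<exists>c::nat \<Rightarrow> real. w i = (\<Sum>j\<in>{p i..<p (Suc i)}. c j *\<^sub>R z j))))"

definition sign_family :: "real \<Rightarrow> (nat \<Rightarrow> 'a::real_normed_vector) \<Rightarrow> nat set set" where
  "sign_family C w = {F. finite F \<and> F \<noteq> {} \<and>
     (\<forall>\<epsilon>::nat \<Rightarrow> real. (\<forall>i\<in>F. \<epsilon> i \<in> {-1, 1}) \<longrightarrow> norm (\<Sum>i\<in>F. \<epsilon> i *\<^sub>R w i) \<le> C)}"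

end

theory Submission
  imports Defs
begin

lemma subspace_closure_rv:
  fixes S :: "'a::real_normed_vector set"
  assumes "subspace S"
  shows "subspace (closure S)"
  unfolding subspace_def
proof (intro conjI ballI allI)
  show "0 \<in> closure S" using assms closure_subset subspace_0 by blast
next
  fix x y assume "x \<in> closure S" "y \<in> closure S"
  then obtain f g where f: "\<forall>n. f n \<in> S" "f \<longlonglongrightarrow> x" and g: "\<forall>n. g n \<in> S" "g \<longlonglongrightarrow> y"
    by (meson closure_sequential)
  have "\<forall>n. f n + g n \<in> S" using f g assms subspace_add by blast
  moreover have "(\<lambda>n. f n + g n) \<longlonglongrightarrow> x + y" using f g tendsto_add by blast
  ultimately show "x + y \<in> closure S" by (meson closure_sequential)
next
  fix c x assume "x \<in> closure S"
  then obtain f where f: "\<forall>n. f n \<in> S" "f \<longlonglongrightarrow> x"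
    by (meson closure_sequential)
  have "\<forall>n. c *\<^sub>R f n \<in> S" using f assms subspace_scale by blast
  moreover have "(\<lambda>n. c *\<^sub>R f n) \<longlonglongrightarrow> c *\<^sub>R x" using f tendsto_scaleR tendsto_const by blast
  ultimately show "c *\<^sub>R x \<in> closure S" by (meson closure_sequential)
qed

locale bb =
  fixes z w :: "nat \<Rightarrow> 'a::banach" and C :: real and p :: "nat \<Rightarrow> nat"
    and cc :: "nat \<Rightarrow> nat \<Rightarrow> real" and jj :: "nat \<Rightarrow> nat"
  assumes bim: "bimonotone_wrt norm UNIV z"
    and p: "strict_mono p"
    and wdef: "\<And>i. w i = (\<Sum>j\<in>{p i..<p (Suc i)}. cc i j *\<^sub>R z j)"
    and jj1: "\<And>i. jj i \<in> {p i..<p (Suc i)}"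
    and jj2: "\<And>i. cc i (jj i) \<noteq> 0"
    and wn: "\<And>i. 1 \<le> norm (w i) \<and> norm (w i) \<le> C"
begin

definition b where "b x = basis_coeff norm z x"

lemma ex1: "\<exists>!a::nat \<Rightarrow> real. (\<lambda>n. norm ((\<Sum>i<n. a i *\<^sub>R z i) - x)) \<longlonglongrightarrow> 0"
  using bim unfolding bimonotone_wrt_def schauder_basis_wrt_def by blast

lemma conv_iff: "((\<lambda>n. norm ((\<Sum>i<n. a i *\<^sub>R z i) - x)) \<longlonglongrightarrow> 0) \<longleftrightarrow> (\<lambda>n. \<Sum>i<n. a i *\<^sub>R z i) \<longlonglongrightarrow> x"
  by (simp add: tendsto_norm_zero_iff LIM_zero_iff)

lemma b_conv: "(\<lambda>n. \<Sum>i<n. b x i *\<^sub>R z i) \<longlonglongrightarrow> x"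
proof -
  have "(\<lambda>n. norm ((\<Sum>i<n. b x i *\<^sub>R z i) - x)) \<longlonglongrightarrow> 0"
    unfolding b_def basis_coeff_def using theI'[OF ex1[of x]] .
  thus ?thesis using conv_iff by blast
qed

lemma b_unique: "(\<lambda>n. \<Sum>i<n. a i *\<^sub>R z i) \<longlonglongrightarrow> x \<Longrightarrow> a = b x"
proof -
  assume "(\<lambda>n. \<Sum>i<n. a i *\<^sub>R z i) \<longlonglongrightarrow> x"
  hence "(\<lambda>n. norm ((\<Sum>i<n. a i *\<^sub>R z i) - x)) \<longlonglongrightarrow> 0" using conv_iff by blast
  hence "(THE a. (\<lambda>n. norm ((\<Sum>i<n. a i *\<^sub>R z i) - x)) \<longlonglongrightarrow> 0) = a"
    by (rule the1_equality[OF ex1])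
  thus ?thesis unfolding b_def basis_coeff_def by (rule sym)
qed

lemma b_add: "b (x + y) = (\<lambda>j. b x j + b y j)"
proof (rule sym, rule b_unique)
  have "(\<lambda>n. (\<Sum>i<n. b x i *\<^sub>R z i) + (\<Sum>i<n. b y i *\<^sub>R z i)) \<longlonglongrightarrow> x + y"
    using b_conv tendsto_add by blast
  thus "(\<lambda>n. \<Sum>i<n. (b x i + b y i) *\<^sub>R z i) \<longlonglongrightarrow> x + y"
    by (simp add: scaleR_add_left sum.distrib)
qed

lemma b_scale: "b (r *\<^sub>R x) = (\<lambda>j. r * b x j)"
proof (rule sym, rule b_unique)
  have "(\<lambda>n. r *\<^sub>R (\<Sum>i<n. b x i *\<^sub>R z i)) \<longlonglongrightarrow> r *\<^sub>R x"
    using b_conv tendsto_scaleR tendsto_const by blast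
  thus "(\<lambda>n. \<Sum>i<n. (r * b x i) *\<^sub>R z i) \<longlonglongrightarrow> r *\<^sub>R x"
    by (simp add: scaleR_sum_right)
qed

lemma b_bound: "norm (b x j *\<^sub>R z j) \<le> norm x"
proof -
  have "norm (\<Sum>i\<in>{j..j}. basis_coeff norm z x i *\<^sub>R z i) \<le> norm x"
    using bim unfolding bimonotone_wrt_def by blast
  thus ?thesis by (simp add: b_def)
qed

lemma z_nz: "z j \<noteq> 0"
proof
  assume z0: "z j = 0"
  let ?a = "(b 0)(j := b 0 j + 1)"
  have "(\<lambda>n. \<Sum>i<n. ?a i *\<^sub>R z i) = (\<lambda>n. \<Sum>i<n. b 0 i *\<^sub>R z i)"
    by (rule ext, rule sum.cong) (auto simp: z0)
  hence "(\<lambda>n. \<Sum>i<n. ?a i *\<^sub>R z i) \<longlonglongrightarrow> 0" using b_conv[of 0] by simp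
  hence "?a = b 0" by (rule b_unique)
  hence "?a j = b 0 j" by simp
  thus False by simp
qed

lemma b_bl: "bounded_linear (\<lambda>x. b x j)"
proof (rule bounded_linear_intro[where K = "1 / norm (z j)"])
  fix x y show "b (x + y) j = b x j + b y j" by (simp add: b_add)
next
  fix r x show "b (r *\<^sub>R x) j = r *\<^sub>R b x j" by (simp add: b_scale)
next
  fix x
  have "\<bar>b x j\<bar> * norm (z j) \<le> norm x" using b_bound[of x j] by simp
  moreover have "norm (z j) > 0" using z_nz by simp
  ultimately show "norm (b x j) \<le> norm x * (1 / norm (z j))"
    by (simp add: field_simps)
qed

lemma b_lin: "linear (\<lambda>x. b x j)"
  using b_bl bounded_linear.linear by blast

lemma b_z: "b (z k) = (\<lambda>j. if j = k then 1 else 0)"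
proof -
  have "(\<lambda>n. \<Sum>i<n. (if i = k then 1 else 0) *\<^sub>R z i) \<longlonglongrightarrow> z k"
  proof (rule tendsto_eventually)
    have "\<forall>n\<ge>Suc k. (\<Sum>i<n. (if i = k then 1 else 0) *\<^sub>R z i) = z k"
    proof (intro allI impI)
      fix n assume "Suc k \<le> n"
      have "(\<Sum>i<n. (if i = k then 1 else 0) *\<^sub>R z i) = (\<Sum>i<n. if i = k then z i else 0)"
        by (rule sum.cong) auto
      also have "\<dots> = z k" using \<open>Suc k \<le> n\<close> by (simp add: sum.delta')
      finally show "(\<Sum>i<n. (if i = k then 1 else 0) *\<^sub>R z i) = z k" .
    qed
    thus "\<forall>\<^sub>F n in sequentially. (\<Sum>i<n. (if i = k then 1 else 0) *\<^sub>R z i) = z k"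
      unfolding eventually_sequentially by blast
  qed
  hence "(\<lambda>i. if i = k then 1 else 0) = b (z k)" by (rule b_unique)
  thus ?thesis by (rule sym)
qed

lemma b_w: "b (w i) j = (if j \<in> {p i..<p (Suc i)} then cc i j else 0)"
proof -
  have "b (w i) j = (\<Sum>l\<in>{p i..<p (Suc i)}. cc i l * b (z l) j)"
    unfolding wdef by (subst linear_sum[OF b_lin]) (simp add: b_scale o_def)
  also have "\<dots> = (\<Sum>l\<in>{p i..<p (Suc i)}. if j = l then cc i l else 0)"
    by (rule sum.cong) (auto simp: b_z)
  also have "\<dots> = (if j \<in> {p i..<p (Suc i)} then cc i j else 0)"
    by (simp add: sum.delta)
  finally show ?thesis .
qed


definition S where "S k x = (\<Sum>j<k. b x j *\<^sub>R z j)"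

lemma S_bl: "bounded_linear (S k)"
  unfolding S_def
  by (intro bounded_linear_sum bounded_linear_compose[OF bounded_linear_scaleR_left b_bl])

lemma S_w: "S (p n) (w k) = (if k < n then w k else 0)"
proof -
  have "S (p n) (w k) = (\<Sum>j<p n. (if j \<in> {p k..<p (Suc k)} then cc k j *\<^sub>R z j else 0))"
    unfolding S_def b_w by (rule sum.cong) auto
  also have "\<dots> = (\<Sum>j\<in>{..<p n} \<inter> {p k..<p (Suc k)}. cc k j *\<^sub>R z j)"
    by (simp add: sum.inter_restrict)
  also have "\<dots> = (if k < n then w k else 0)"
  proof (cases "k < n")
    case True
    hence "p (Suc k) \<le> p n" by (intro strict_mono_leD[OF p]) simp
    hence "{..<p n} \<inter> {p k..<p (Suc k)} = {p k..<p (Suc k)}" by auto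
    thus ?thesis using True wdef by simp
  next
    case False
    hence "p n \<le> p k" by (intro strict_mono_leD[OF p]) simp
    hence "{..<p n} \<inter> {p k..<p (Suc k)} = {}" by auto
    thus ?thesis using False by simp
  qed
  finally show ?thesis .
qed

definition e where "e k x = b x (jj k) / cc k (jj k)"

lemma e_bl: "bounded_linear (e k)"
  unfolding e_def by (rule bounded_linear_compose[OF bounded_linear_divide b_bl])

lemma e_lin: "linear (e k)"
  using e_bl bounded_linear.linear by blast

lemma jj_block: "jj k \<in> {p i..<p (Suc i)} \<longleftrightarrow> i = k"
proof
  assume h: "jj k \<in> {p i..<p (Suc i)}"
  show "i = k"
  proof (rule ccontr)
    assume "i \<noteq> k"
    hence "i < k \<or> k < i" by arith
    thus False
    proof
      assume "i < k"
      hence "p (Suc i) \<le> p k" by (intro strict_mono_leD[OF p]) simp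
      thus False using h jj1[of k] by simp
    next
      assume "k < i"
      hence "p (Suc k) \<le> p i" by (intro strict_mono_leD[OF p]) simp
      thus False using h jj1[of k] by simp
    qed
  qed
next
  assume "i = k" thus "jj k \<in> {p i..<p (Suc i)}" using jj1 by simp
qed

lemma e_w: "e k (w i) = (if k = i then 1 else 0)"
  unfolding e_def b_w using jj_block[of k i] jj2[of k] by auto

lemma e_sum: "finite A \<Longrightarrow> e k (\<Sum>i\<in>A. a i *\<^sub>R w i) = (if k \<in> A then a k else 0)"
proof -
  assume A: "finite A"
  have "e k (\<Sum>i\<in>A. a i *\<^sub>R w i) = (\<Sum>i\<in>A. a i * e k (w i))"
    by (subst linear_sum[OF e_lin]) (simp add: o_def linear_scale[OF e_lin])
  also have "\<dots> = (\<Sum>i\<in>A. if k = i then a i else 0)"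
    by (rule sum.cong) (auto simp: e_w)
  also have "\<dots> = (if k \<in> A then a k else 0)" using A by simp
  finally show ?thesis .
qed

definition Y where "Y = closure (span (range w))"

lemma Y_sub: "subspace Y"
  unfolding Y_def by (rule subspace_closure_rv) (rule subspace_span)

lemma span_Y: "span (range w) \<subseteq> Y"
  unfolding Y_def by (rule closure_subset)

lemma w_Y: "w i \<in> Y"
  using span_Y span_superset by blast

lemma sum_Y: "(\<Sum>i\<in>A. a i *\<^sub>R w i) \<in> Y"
proof -
  have "(\<Sum>i\<in>A. a i *\<^sub>R w i) \<in> span (range w)"
    by (intro span_sum span_scale) (simp add: span_base)
  thus ?thesis using span_Y by blast
qed

lemma zero_on_Y:
  assumes T: "bounded_linear T" and Tw: "\<And>i. T (w i) = 0" and x: "x \<in> Y"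
  shows "T x = 0"
proof -
  have lin: "linear T" using T bounded_linear.linear by blast
  have "span (range w) \<subseteq> {x. T x = 0}"
    by (rule span_minimal) (auto simp: Tw intro: linear_subspace_kernel[OF lin])
  moreover have "closed {x. T x = 0}"
    by (rule closed_Collect_eq) (auto intro: linear_continuous_on T)
  ultimately have "Y \<subseteq> {x. T x = 0}" unfolding Y_def by (rule closure_minimal)
  thus ?thesis using x by blast
qed

lemma key: "x \<in> Y \<Longrightarrow> (\<Sum>i<n. e i x *\<^sub>R w i) = S (p n) x"
proof -
  assume x: "x \<in> Y"
  let ?T = "\<lambda>x. (\<Sum>i<n. e i x *\<^sub>R w i) - S (p n) x"
  have "bounded_linear ?T"
    by (intro bounded_linear_sub bounded_linear_sum S_bl
        bounded_linear_compose[OF bounded_linear_scaleR_left e_bl])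
  moreover have "?T (w k) = 0" for k
  proof -
    have "(\<Sum>i<n. e i (w k) *\<^sub>R w i) = (\<Sum>i<n. if i = k then w i else 0)"
      by (rule sum.cong) (auto simp: e_w)
    also have "\<dots> = (if k < n then w k else 0)" by simp
    finally show ?thesis using S_w by simp
  qed
  ultimately have "?T x = 0" using zero_on_Y x by blast
  thus ?thesis by simp
qed

lemma w_conv: "x \<in> Y \<Longrightarrow> (\<lambda>n. \<Sum>i<n. e i x *\<^sub>R w i) \<longlonglongrightarrow> x"
proof -
  assume x: "x \<in> Y"
  have "((\<lambda>k. S k x) \<circ> p) \<longlonglongrightarrow> x"
    by (rule LIMSEQ_subseq_LIMSEQ[OF _ p]) (unfold S_def, rule b_conv)
  thus ?thesis using key[OF x] by (simp add: o_def)
qed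

lemma w_uniq: "(\<lambda>n. \<Sum>i<n. a i *\<^sub>R w i) \<longlonglongrightarrow> x \<Longrightarrow> a k = e k x"
proof -
  assume h: "(\<lambda>n. \<Sum>i<n. a i *\<^sub>R w i) \<longlonglongrightarrow> x"
  have 1: "(\<lambda>n. e k (\<Sum>i<n. a i *\<^sub>R w i)) \<longlonglongrightarrow> e k x"
    using bounded_linear.tendsto[OF e_bl h] .
  have "\<forall>n\<ge>Suc k. e k (\<Sum>i<n. a i *\<^sub>R w i) = a k"
    by (auto simp: e_sum)
  hence "\<forall>\<^sub>F n in sequentially. e k (\<Sum>i<n. a i *\<^sub>R w i) = a k"
    unfolding eventually_sequentially by blast
  hence 2: "(\<lambda>n. e k (\<Sum>i<n. a i *\<^sub>R w i)) \<longlonglongrightarrow> a k"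
    by (rule tendsto_eventually)
  show ?thesis using LIMSEQ_unique[OF 2 1] .
qed

lemma interval: "x \<in> Y \<Longrightarrow> norm (\<Sum>i\<in>{m..n}. e i x *\<^sub>R w i) \<le> norm x"
proof (cases "m \<le> n")
  case False
  thus ?thesis by simp
next
  case True
  assume x: "x \<in> Y"
  have diff: "sum f {..<b'} - sum f {..<a'} = sum f {a'..<b'}" if "a' \<le> b'"
    for f :: "nat \<Rightarrow> 'a" and a' b'
    using sum_diff_nat_ivl[of 0 a' b' f] that by (simp add: atLeast0LessThan)
  have "(\<Sum>i\<in>{m..n}. e i x *\<^sub>R w i) = (\<Sum>i<Suc n. e i x *\<^sub>R w i) - (\<Sum>i<m. e i x *\<^sub>R w i)"
  proof -
    have "(\<Sum>i<Suc n. e i x *\<^sub>R w i) - (\<Sum>i<m. e i x *\<^sub>R w i) = (\<Sum>i\<in>{m..<Suc n}. e i x *\<^sub>R w i)"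
      by (rule diff) (use True in simp)
    thus ?thesis unfolding atLeastLessThanSuc_atLeastAtMost by (rule sym)
  qed
  also have "\<dots> = S (p (Suc n)) x - S (p m) x" using key[OF x] by simp
  also have "\<dots> = (\<Sum>j\<in>{p m..<p (Suc n)}. b x j *\<^sub>R z j)"
  proof -
    have "p m \<le> p (Suc n)" by (rule strict_mono_leD[OF p]) (use True in simp)
    thus ?thesis unfolding S_def by (rule diff)
  qed
  also have "{p m..<p (Suc n)} = {p m..p (Suc n) - 1}"
  proof -
    have "p m < p (Suc n)" using True p by (simp add: strict_mono_less)
    thus ?thesis by auto
  qed
  finally have eq: "(\<Sum>i\<in>{m..n}. e i x *\<^sub>R w i) = (\<Sum>j\<in>{p m..p (Suc n) - 1}. b x j *\<^sub>R z j)" .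
  have "norm (\<Sum>j\<in>{p m..p (Suc n) - 1}. basis_coeff norm z x j *\<^sub>R z j) \<le> norm x"
    using bim unfolding bimonotone_wrt_def by blast
  thus ?thesis unfolding eq b_def .
qed

lemma e_bound: "x \<in> Y \<Longrightarrow> \<bar>e k x\<bar> \<le> norm x"
proof -
  assume x: "x \<in> Y"
  have "norm (e k x *\<^sub>R w k) \<le> norm x" using interval[OF x, of k k] by simp
  moreover have "\<bar>e k x\<bar> \<le> \<bar>e k x\<bar> * norm (w k)" using wn[of k]
    by (metis abs_ge_zero mult_le_cancel_left1 mult.commute mult_left_mono mult_1_right)
  ultimately show ?thesis by simp
qed

lemma C_ge: "1 \<le> C" using wn[of 0] by linarith

definition N where "N x = max (norm x / C) (SUP k. \<bar>e k x\<bar>)"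

lemma sup_ge: "x \<in> Y \<Longrightarrow> \<bar>e k x\<bar> \<le> (SUP k. \<bar>e k x\<bar>)"
  by (rule cSUP_upper) (auto intro!: bdd_aboveI2 e_bound)

lemma N_lower: "x \<in> Y \<Longrightarrow> norm x / C \<le> N x"
  unfolding N_def by simp

lemma N_ge_e: "x \<in> Y \<Longrightarrow> \<bar>e k x\<bar> \<le> N x"
  unfolding N_def using sup_ge[of x k] by (simp add: le_max_iff_disj)

lemma N_le: "norm x / C \<le> M \<Longrightarrow> (\<And>k. \<bar>e k x\<bar> \<le> M) \<Longrightarrow> N x \<le> M"
  unfolding N_def by (simp add: cSUP_least)

lemma N_upper: "x \<in> Y \<Longrightarrow> N x \<le> (1 + 1 / C) * norm x"
proof (rule N_le)
  assume x: "x \<in> Y"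
  show "norm x / C \<le> (1 + 1 / C) * norm x" by (simp add: field_simps)
  fix k show "\<bar>e k x\<bar> \<le> (1 + 1 / C) * norm x"
  proof -
    have "0 \<le> norm x / C" using C_ge by simp
    moreover have "(1 + 1 / C) * norm x = norm x + norm x / C" by (simp add: distrib_right)
    ultimately show ?thesis using e_bound[OF x, of k] by linarith
  qed
qed


lemma C_pos: "0 < C" using C_ge by simp

lemma N_nonneg: "x \<in> Y \<Longrightarrow> 0 \<le> N x"
  using N_lower[of x] C_pos by (meson divide_nonneg_pos norm_ge_zero order_trans)

lemma e_add: "e k (x + y) = e k x + e k y"
  using linear_add[OF e_lin] .

lemma e_scale: "e k (c *\<^sub>R x) = c * e k x"
  using linear_scale[OF e_lin] by simp

lemma e_zero: "e k 0 = 0"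
  using linear_0[OF e_lin] .

lemma N_zero: "N 0 = 0"
proof -
  have "N 0 \<le> 0" by (rule N_le) (auto simp: e_zero)
  moreover have "0 \<le> N 0" using N_nonneg subspace_0[OF Y_sub] by blast
  ultimately show ?thesis by simp
qed

lemma N_eq0: "x \<in> Y \<Longrightarrow> N x = 0 \<Longrightarrow> x = 0"
proof -
  assume x: "x \<in> Y" and "N x = 0"
  hence "norm x / C \<le> 0" using N_lower by metis
  hence "norm x \<le> 0" using C_pos by (simp add: divide_le_0_iff)
  thus "x = 0" by simp
qed

lemma N_tri: "x \<in> Y \<Longrightarrow> y \<in> Y \<Longrightarrow> N (x + y) \<le> N x + N y"
proof (rule N_le)
  assume x: "x \<in> Y" and y: "y \<in> Y"
  have "norm (x + y) / C \<le> (norm x + norm y) / C"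
    by (rule divide_right_mono[OF norm_triangle_ineq]) (use C_pos in simp)
  also have "\<dots> = norm x / C + norm y / C" by (simp add: add_divide_distrib)
  also have "\<dots> \<le> N x + N y" using N_lower[OF x] N_lower[OF y] by linarith
  finally show "norm (x + y) / C \<le> N x + N y" .
  fix k
  have "\<bar>e k (x + y)\<bar> \<le> \<bar>e k x\<bar> + \<bar>e k y\<bar>" by (simp add: e_add abs_triangle_ineq)
  thus "\<bar>e k (x + y)\<bar> \<le> N x + N y" using N_ge_e[OF x, of k] N_ge_e[OF y, of k] by linarith
qed

lemma N_scale_le: "x \<in> Y \<Longrightarrow> N (c *\<^sub>R x) \<le> \<bar>c\<bar> * N x"
proof (rule N_le)
  assume x: "x \<in> Y"
  have "norm (c *\<^sub>R x) / C = \<bar>c\<bar> * (norm x / C)" by simp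
  also have "\<dots> \<le> \<bar>c\<bar> * N x" by (rule mult_left_mono[OF N_lower[OF x]]) simp
  finally show "norm (c *\<^sub>R x) / C \<le> \<bar>c\<bar> * N x" .
  fix k
  have "\<bar>e k (c *\<^sub>R x)\<bar> = \<bar>c\<bar> * \<bar>e k x\<bar>" by (simp add: e_scale abs_mult)
  also have "\<dots> \<le> \<bar>c\<bar> * N x" by (rule mult_left_mono[OF N_ge_e[OF x]]) simp
  finally show "\<bar>e k (c *\<^sub>R x)\<bar> \<le> \<bar>c\<bar> * N x" .
qed

lemma N_scale: "x \<in> Y \<Longrightarrow> N (c *\<^sub>R x) = \<bar>c\<bar> * N x"
proof (cases "c = 0")
  case True thus ?thesis by (simp add: N_zero)
next
  case False
  assume x: "x \<in> Y"
  have cx: "c *\<^sub>R x \<in> Y" using Y_sub x subspace_scale by blast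
  have "N x = N (inverse c *\<^sub>R (c *\<^sub>R x))" using False by simp
  also have "\<dots> \<le> \<bar>inverse c\<bar> * N (c *\<^sub>R x)" by (rule N_scale_le[OF cx])
  finally have "\<bar>c\<bar> * N x \<le> \<bar>c\<bar> * (\<bar>inverse c\<bar> * N (c *\<^sub>R x))"
    by (rule mult_left_mono) simp
  also have "\<dots> = N (c *\<^sub>R x)" using False by (simp add: abs_inverse)
  finally show ?thesis using N_scale_le[OF x, of c] by linarith
qed

lemma N_conv_iff:
  assumes x: "x \<in> Y"
  shows "((\<lambda>n. N ((\<Sum>i<n. a i *\<^sub>R w i) - x)) \<longlonglongrightarrow> 0) \<longleftrightarrow> (\<lambda>n. \<Sum>i<n. a i *\<^sub>R w i) \<longlonglongrightarrow> x"
proof -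
  define d where "d n = (\<Sum>i<n. a i *\<^sub>R w i) - x" for n
  have dY: "d n \<in> Y" for n unfolding d_def using subspace_diff[OF Y_sub sum_Y x] .
  have "((\<lambda>n. N (d n)) \<longlonglongrightarrow> 0) \<longleftrightarrow> d \<longlonglongrightarrow> 0"
  proof
    assume h: "(\<lambda>n. N (d n)) \<longlonglongrightarrow> 0"
    show "d \<longlonglongrightarrow> 0"
    proof (rule Lim_null_comparison)
      show "\<forall>\<^sub>F n in sequentially. norm (d n) \<le> C * N (d n)"
        using N_lower[OF dY] C_pos by (simp add: divide_le_eq mult.commute)
      show "(\<lambda>n. C * N (d n)) \<longlonglongrightarrow> 0" using tendsto_mult[OF tendsto_const h, of C] by simp
    qed
  next
    assume h: "d \<longlonglongrightarrow> 0"
    show "(\<lambda>n. N (d n)) \<longlonglongrightarrow> 0"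
    proof (rule Lim_null_comparison)
      show "\<forall>\<^sub>F n in sequentially. norm (N (d n)) \<le> (1 + 1 / C) * norm (d n)"
        using N_upper[OF dY] N_nonneg[OF dY] by simp
      have "(\<lambda>n. norm (d n)) \<longlonglongrightarrow> 0" using h tendsto_norm_zero by blast
      thus "(\<lambda>n. (1 + 1 / C) * norm (d n)) \<longlonglongrightarrow> 0"
        using tendsto_mult[OF tendsto_const, of _ 0 sequentially "1 + 1/C"] by simp
    qed
  qed
  thus ?thesis unfolding d_def using LIM_zero_iff[of "\<lambda>n. \<Sum>i<n. a i *\<^sub>R w i" x sequentially]
    by simp
qed

lemma ex1_N: "x \<in> Y \<Longrightarrow> \<exists>!a::nat \<Rightarrow> real. (\<lambda>n. N ((\<Sum>i<n. a i *\<^sub>R w i) - x)) \<longlonglongrightarrow> 0"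
proof -
  assume x: "x \<in> Y"
  show ?thesis
  proof (rule ex1I[of _ "\<lambda>i. e i x"])
    show "(\<lambda>n. N ((\<Sum>i<n. e i x *\<^sub>R w i) - x)) \<longlonglongrightarrow> 0"
      using N_conv_iff[OF x, of "\<lambda>i. e i x"] w_conv[OF x] by simp
  next
    fix a assume "(\<lambda>n. N ((\<Sum>i<n. a i *\<^sub>R w i) - x)) \<longlonglongrightarrow> 0"
    hence "(\<lambda>n. \<Sum>i<n. a i *\<^sub>R w i) \<longlonglongrightarrow> x" using N_conv_iff[OF x, of a] by simp
    thus "a = (\<lambda>i. e i x)" using w_uniq by blast
  qed
qed

lemma coeff_N: "x \<in> Y \<Longrightarrow> basis_coeff N w x = (\<lambda>i. e i x)"
proof -
  assume x: "x \<in> Y"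
  have "(\<lambda>n. N ((\<Sum>i<n. e i x *\<^sub>R w i) - x)) \<longlonglongrightarrow> 0"
    using N_conv_iff[OF x, of "\<lambda>i. e i x"] w_conv[OF x] by simp
  thus ?thesis unfolding basis_coeff_def by (rule the1_equality[OF ex1_N[OF x]])
qed

lemma result:
  "is_norm_on Y N \<and> equiv_norm_on Y N \<and> bimonotone_wrt N Y w \<and> (\<forall>i. N (w i) = 1) \<and>
   (\<forall>F\<in>sign_family C w. \<forall>\<epsilon>::nat \<Rightarrow> real. (\<forall>i\<in>F. \<epsilon> i \<in> {-1, 1}) \<longrightarrow>
      N (\<Sum>i\<in>F. \<epsilon> i *\<^sub>R w i) = 1)"
proof (intro conjI)
  show "is_norm_on Y N"
    unfolding is_norm_on_def
    using Y_sub N_nonneg N_eq0 N_zero N_tri N_scale by blast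
  show "equiv_norm_on Y N"
    unfolding equiv_norm_on_def
  proof (intro exI conjI ballI)
    show "0 < 1 / C" using C_pos by simp
    have "0 < 1 / C" using C_pos by simp
    thus "0 < 1 + 1 / C" by linarith
    fix y assume y: "y \<in> Y"
    show "1 / C * norm y \<le> N y" using N_lower[OF y] by simp
    show "N y \<le> (1 + 1 / C) * norm y" using N_upper[OF y] .
  qed
  show "bimonotone_wrt N Y w"
    unfolding bimonotone_wrt_def schauder_basis_wrt_def
  proof (intro conjI ballI allI)
    fix i show "w i \<in> Y" by (rule w_Y)
  next
    fix x assume "x \<in> Y" thus "\<exists>!a::nat \<Rightarrow> real. (\<lambda>n. N ((\<Sum>i<n. a i *\<^sub>R w i) - x)) \<longlonglongrightarrow> 0"
      by (rule ex1_N)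
  next
    fix x m n assume x: "x \<in> Y"
    show "N (\<Sum>i\<in>{m..n}. basis_coeff N w x i *\<^sub>R w i) \<le> N x"
      unfolding coeff_N[OF x]
    proof (rule N_le)
      show "norm (\<Sum>i\<in>{m..n}. e i x *\<^sub>R w i) / C \<le> N x"
        using interval[OF x, of m n] N_lower[OF x] C_pos
        by (meson divide_right_mono less_imp_le order_trans)
      fix k
      have "\<bar>e k (\<Sum>i\<in>{m..n}. e i x *\<^sub>R w i)\<bar> \<le> \<bar>e k x\<bar>" by (simp add: e_sum)
      thus "\<bar>e k (\<Sum>i\<in>{m..n}. e i x *\<^sub>R w i)\<bar> \<le> N x" using N_ge_e[OF x, of k] by linarith
    qed
  qed
  show "\<forall>i. N (w i) = 1"
  proof
    fix i
    have "N (w i) \<le> 1"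
    proof (rule N_le)
      show "norm (w i) / C \<le> 1" using wn[of i] C_pos by simp
      fix k show "\<bar>e k (w i)\<bar> \<le> 1" by (simp add: e_w)
    qed
    moreover have "1 \<le> N (w i)" using N_ge_e[OF w_Y, of i i] by (simp add: e_w)
    ultimately show "N (w i) = 1" by simp
  qed
  show "\<forall>F\<in>sign_family C w. \<forall>\<epsilon>::nat \<Rightarrow> real. (\<forall>i\<in>F. \<epsilon> i \<in> {-1, 1}) \<longrightarrow>
      N (\<Sum>i\<in>F. \<epsilon> i *\<^sub>R w i) = 1"
  proof (intro ballI allI impI)
    fix F and \<epsilon> :: "nat \<Rightarrow> real"
    assume F: "F \<in> sign_family C w" and eps: "\<forall>i\<in>F. \<epsilon> i \<in> {-1, 1}"
    have fin: "finite F" and ne: "F \<noteq> {}" and nb: "norm (\<Sum>i\<in>F. \<epsilon> i *\<^sub>R w i) \<le> C"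
      using F eps unfolding sign_family_def by auto
    have ek: "e k (\<Sum>i\<in>F. \<epsilon> i *\<^sub>R w i) = (if k \<in> F then \<epsilon> k else 0)" for k
      using e_sum[OF fin] .
    have "N (\<Sum>i\<in>F. \<epsilon> i *\<^sub>R w i) \<le> 1"
    proof (rule N_le)
      show "norm (\<Sum>i\<in>F. \<epsilon> i *\<^sub>R w i) / C \<le> 1" using nb C_pos by simp
      fix k show "\<bar>e k (\<Sum>i\<in>F. \<epsilon> i *\<^sub>R w i)\<bar> \<le> 1" using eps by (auto simp: ek)
    qed
    moreover obtain i where i: "i \<in> F" using ne by blast
    have "1 \<le> N (\<Sum>i\<in>F. \<epsilon> i *\<^sub>R w i)"
      using N_ge_e[OF sum_Y, of i \<epsilon> F] i eps by (auto simp: ek)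
    ultimately show "N (\<Sum>i\<in>F. \<epsilon> i *\<^sub>R w i) = 1" by simp
  qed
qed

end

theorem mainTheorem9:
  fixes z w :: "nat \<Rightarrow> 'a::banach" and C :: real
  assumes "bimonotone_wrt norm UNIV z"
    and "block_basis_of w z"
    and "\<And>i. 1 \<le> norm (w i) \<and> norm (w i) \<le> C"
  shows "\<exists>N :: 'a \<Rightarrow> real.
           is_norm_on (closure (span (range w))) N \<and>
           equiv_norm_on (closure (span (range w))) N \<and>
           bimonotone_wrt N (closure (span (range w))) w \<and>
           (\<forall>i. N (w i) = 1) \<and>
           (\<forall>F\<in>sign_family C w. \<forall>\<epsilon>::nat \<Rightarrow> real. (\<forall>i\<in>F. \<epsilon> i \<in> {-1, 1}) \<longrightarrow>
              N (\<Sum>i\<in>F. \<epsilon> i *\<^sub>R w i) = 1)"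
proof -
  obtain p where p: "strict_mono p"
    and blk: "\<forall>i. w i \<noteq> 0 \<and> (\<exists>c::nat \<Rightarrow> real. w i = (\<Sum>j\<in>{p i..<p (Suc i)}. c j *\<^sub>R z j))"
    using assms(2) unfolding block_basis_of_def by blast
  have "\<exists>cc. \<forall>i. w i = (\<Sum>j\<in>{p i..<p (Suc i)}. cc i j *\<^sub>R z j)"
    by (rule choice) (use blk in blast)
  then obtain cc where cc: "\<forall>i. w i = (\<Sum>j\<in>{p i..<p (Suc i)}. cc i j *\<^sub>R z j)" by blast
  have "\<forall>i. \<exists>j. j \<in> {p i..<p (Suc i)} \<and> cc i j \<noteq> 0"
  proof
    fix i show "\<exists>j. j \<in> {p i..<p (Suc i)} \<and> cc i j \<noteq> 0"
    proof (rule ccontr)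
      assume "\<not> ?thesis"
      hence "\<forall>j\<in>{p i..<p (Suc i)}. cc i j *\<^sub>R z j = 0" by auto
      hence "(\<Sum>j\<in>{p i..<p (Suc i)}. cc i j *\<^sub>R z j) = 0" by (rule sum.neutral)
      hence "w i = 0" using cc by simp
      thus False using blk by blast
    qed
  qed
  then obtain jj where jj: "\<forall>i. jj i \<in> {p i..<p (Suc i)} \<and> cc i (jj i) \<noteq> 0"
    by (metis (mono_tags))
  interpret bb z w C p cc jj
    by unfold_locales (use assms(1,3) p cc jj in auto)
  show ?thesis using result unfolding Y_def by blast
qed

end
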